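(* Let $\phi$ be the characteristic function of the limiting Quicksort random variable $Y$, and for $p\ge0$ let $c_p:=\sup_{t\in\mathbb{R}}|t|^p|\phi(t)|\in[0,\infty]$. Then for every $0<p<1$, $$c_{2p}\le \frac{[\Gamma(1-p)]^2}{\Gamma(2-2p)}\,c_p^2 .$$
   Context: Let $g(u):=2u\ln u+2(1-u)\ln(1-u)+1$ for $u\in(0,1)$. The limiting Quicksort random variable $Y$ is the limit in distribution of $(X_n-\mathbf{E}X_n)/n$, where $X_n$ is the number of comparisons used by randomized Quicksort on $n$ distinct numbers; equivalently, its law is the unique law with $\mathbf{E}Y=0$ and finite variance satisfying $Y\overset{d}{=}UY+(1-U)Z+g(U)$, where on the right $U,Y,Z$ are independent, $Z\overset{d}{=}Y$ and $U$ is uniform on $(0,1)$. *)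

theory Defs
  imports "HOL-Probability.Probability"
begin

definition qs_g :: "real \<Rightarrow> real" where
  "qs_g u = 2 * u * ln u + 2 * (1 - u) * ln (1 - u) + 1"

definition unif01 :: "real measure" where
  "unif01 = uniform_measure lborel {0<..<1}"

text \<open>M is the law of the limiting Quicksort random variable Y: the unique law on the
  reals with mean 0 and finite variance satisfying
  Y =d U Y + (1-U) Z + g(U) with U, Y, Z independent, Z =d Y, U uniform on (0,1).\<close>
definition quicksort_limit_law :: "real measure \<Rightarrow> bool" where
  "quicksort_limit_law M \<longleftrightarrow>
     real_distribution M \<and>
     integrable M (\<lambda>x. x\<^sup>2) \<and>
     integral\<^sup>L M (\<lambda>x. x) = 0 \<and>
     distr (unif01 \<Otimes>\<^sub>M (M \<Otimes>\<^sub>M M)) borel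
        (\<lambda>(u, y, z). u * y + (1 - u) * z + qs_g u) = M"

definition qs_c :: "real measure \<Rightarrow> real \<Rightarrow> ennreal" where
  "qs_c M p = (SUP t\<in>UNIV. ennreal (\<bar>t\<bar> powr p * cmod (char M t)))"

end

theory Submission
  imports Defs
begin

lemma inner_prod:
  assumes M: "real_distribution M"
  shows "(\<integral>w. iexp (t * (u * fst w + (1 - u) * snd w + c)) \<partial>(M \<Otimes>\<^sub>M M))
        = iexp (t * c) * char M (t * u) * char M (t * (1 - u))"
proof -
  interpret real_distribution M by (rule M)
  interpret P: pair_prob_space M M by unfold_locales
  have eq: "\<And>y z. iexp (t * (u * y + (1 - u) * z + c)) = iexp (t * c) * iexp ((t*u) * y) * iexp ((t*(1-u)) * z)"
    by (simp add: algebra_simps flip: exp_add)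
  have int: "integrable (M \<Otimes>\<^sub>M M) (\<lambda>w. iexp (t * (u * fst w + (1 - u) * snd w + c)))"
    by (rule P.integrable_const_bound[where B=1]) (auto simp: norm_exp_i_times)
  have "(\<integral>w. iexp (t * (u * fst w + (1 - u) * snd w + c)) \<partial>(M \<Otimes>\<^sub>M M))
     = (\<integral>y. \<integral>z. iexp (t * (u * y + (1 - u) * z + c)) \<partial>M \<partial>M)"
    using P.integral_fst'[OF int] by simp
  also have "\<dots> = (\<integral>y. iexp (t * c) * iexp ((t*u) * y) * char M (t * (1 - u)) \<partial>M)"
    unfolding eq char_def by simp
  also have "\<dots> = iexp (t * c) * char M (t * u) * char M (t * (1 - u))"
    unfolding char_def by simp
  finally show ?thesis .
qed


lemma sets_unif01[measurable_cong]: "sets unif01 = sets borel"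
  unfolding unif01_def by simp

lemma prob_unif01: "prob_space unif01"
  unfolding unif01_def by (rule prob_space_uniform_measure) auto

lemma char_bound:
  assumes M: "real_distribution M"
    and D: "distr (unif01 \<Otimes>\<^sub>M (M \<Otimes>\<^sub>M M)) borel
        (\<lambda>(u, y, z). u * y + (1 - u) * z + qs_g u) = M"
  shows "ennreal (norm (char M t)) \<le> (\<integral>\<^sup>+u. ennreal (norm (char M (t*u)) * norm (char M (t*(1-u)))) \<partial>unif01)"
proof -
  interpret real_distribution M by (rule M)
  interpret P: pair_prob_space M M by unfold_locales
  interpret U: prob_space unif01 by (rule prob_unif01)
  interpret Q: pair_prob_space unif01 "M \<Otimes>\<^sub>M M" by unfold_locales
  have gm[measurable]: "qs_g \<in> borel_measurable borel" unfolding qs_g_def by measurable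
  let ?f = "\<lambda>x::real\<times>real\<times>real. iexp (t * (fst x * fst (snd x) + (1 - fst x) * snd (snd x) + qs_g (fst x)))"
  have "char M t = char (distr (unif01 \<Otimes>\<^sub>M (M \<Otimes>\<^sub>M M)) borel
        (\<lambda>(u, y, z). u * y + (1 - u) * z + qs_g u)) t" using D by simp
  also have "\<dots> = integral\<^sup>L (unif01 \<Otimes>\<^sub>M (M \<Otimes>\<^sub>M M)) ?f"
    unfolding char_def
    by (subst integral_distr) (auto simp: split_beta')
  finally have c1: "char M t = integral\<^sup>L (unif01 \<Otimes>\<^sub>M (M \<Otimes>\<^sub>M M)) ?f" .
  have int: "integrable (unif01 \<Otimes>\<^sub>M (M \<Otimes>\<^sub>M M)) ?f"
    by (rule Q.integrable_const_bound[where B=1]) auto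
  have c2: "integral\<^sup>L (unif01 \<Otimes>\<^sub>M (M \<Otimes>\<^sub>M M)) ?f = (\<integral>u. (\<integral>w. ?f (u, w) \<partial>(M \<Otimes>\<^sub>M M)) \<partial>unif01)"
    using Q.integral_fst'[OF int] by simp
  have int2: "integrable unif01 (\<lambda>u. (\<integral>w. ?f (u, w) \<partial>(M \<Otimes>\<^sub>M M)))"
    using Q.integrable_fst'[OF int] by simp
  have c3: "\<And>u. (\<integral>w. ?f (u, w) \<partial>(M \<Otimes>\<^sub>M M)) = iexp (t * qs_g u) * char M (t * u) * char M (t * (1 - u))"
    using inner_prod[OF M] by simp
  have "ennreal (norm (char M t)) \<le> (\<integral>\<^sup>+u. norm (\<integral>w. ?f (u, w) \<partial>(M \<Otimes>\<^sub>M M)) \<partial>unif01)"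
    unfolding c1 c2 by (rule integral_norm_bound_ennreal[OF int2])
  also have "\<dots> = (\<integral>\<^sup>+u. ennreal (norm (char M (t*u)) * norm (char M (t*(1-u)))) \<partial>unif01)"
    unfolding c3 by (simp add: norm_mult)
  finally show ?thesis .
qed


lemma beta_nn:
  assumes p: "0 < p" "p < 1"
  shows "(\<integral>\<^sup>+u. ennreal (u powr (-p) * (1-u) powr (-p)) \<partial>unif01) = ennreal (Beta (1-p) (1-p))"
proof -
  have hi: "((\<lambda>u. u powr (-p) * (1-u) powr (-p)) has_integral Beta (1-p) (1-p)) {0<..<1}"
    using has_integral_Beta_real[of "1-p" "1-p"] p by (simp add: has_integral_Icc_iff_Ioo)
  have eqf: "\<And>u::real. ennreal (u powr (-p) * (1-u) powr (-p)) * indicator {0<..<1} u = ennreal (indicator {0<..<1} u * (u powr (-p) * (1-u) powr (-p)))"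
    by (auto simp: indicator_def)
  have "(\<integral>\<^sup>+u. ennreal (u powr (-p) * (1-u) powr (-p)) \<partial>unif01)
      = (\<integral>\<^sup>+u. ennreal (u powr (-p) * (1-u) powr (-p)) * indicator {0<..<1} u \<partial>lborel) / emeasure lborel {0<..<1::real}"
    unfolding unif01_def by (rule nn_integral_uniform_measure) auto
  also have "\<dots> = (\<integral>\<^sup>+u. ennreal (indicator {0<..<1} u * (u powr (-p) * (1-u) powr (-p))) \<partial>lborel)"
    unfolding eqf by (simp add: divide_ennreal_def)
  also have "\<dots> = ennreal (Beta (1-p) (1-p))"
    by (rule nn_integral_has_integral_lebesgue[OF _ hi]) auto
  finally show ?thesis .
qed

lemma phi_bound:
  assumes "qs_c M p = ennreal c0" "c0 \<ge> 0" "s \<noteq> 0"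
  shows "norm (char M s) \<le> c0 * \<bar>s\<bar> powr (-p)"
proof -
  have "ennreal (\<bar>s\<bar> powr p * cmod (char M s)) \<le> qs_c M p"
    unfolding qs_c_def by (rule SUP_upper) auto
  hence "\<bar>s\<bar> powr p * cmod (char M s) \<le> c0" using assms(1,2)
    by (simp add: ennreal_le_iff)
  hence "\<bar>s\<bar> powr (-p) * (\<bar>s\<bar> powr p * cmod (char M s)) \<le> \<bar>s\<bar> powr (-p) * c0"
    by (intro mult_left_mono) auto
  moreover have "\<bar>s\<bar> powr (-p) * \<bar>s\<bar> powr p = 1"
    using assms(3) by (simp add: powr_add[symmetric])
  moreover have "\<bar>s\<bar> powr (-p) * (\<bar>s\<bar> powr p * cmod (char M s)) = (\<bar>s\<bar> powr (-p) * \<bar>s\<bar> powr p) * cmod (char M s)"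
    by (simp only: mult.assoc)
  ultimately show ?thesis by (metis mult_1 mult.commute)
qed


lemma Beta_pos: "0 < (a::real) \<Longrightarrow> Beta a a > 0"
  unfolding Beta_def by (simp add: Gamma_real_pos)

lemma pointwise:
  assumes M: "real_distribution M"
    and D: "distr (unif01 \<Otimes>\<^sub>M (M \<Otimes>\<^sub>M M)) borel
        (\<lambda>(u, y, z). u * y + (1 - u) * z + qs_g u) = M"
    and p: "0 < p" "p < 1" and c: "qs_c M p = ennreal c0" "c0 \<ge> 0" and t: "t \<noteq> 0"
  shows "\<bar>t\<bar> powr (2*p) * norm (char M t) \<le> c0\<^sup>2 * Beta (1-p) (1-p)"
proof -
  define C where "C = c0\<^sup>2 * \<bar>t\<bar> powr (-2*p)"
  have C0: "C \<ge> 0" unfolding C_def by simp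
  have pw: "norm (char M (t*u)) * norm (char M (t*(1-u))) \<le> C * (u powr (-p) * (1-u) powr (-p))"
    if u: "0 < u" "u < 1" for u
  proof -
    have "norm (char M (t*u)) * norm (char M (t*(1-u))) \<le> (c0 * \<bar>t*u\<bar> powr (-p)) * (c0 * \<bar>t*(1-u)\<bar> powr (-p))"
      using u t c by (intro mult_mono phi_bound) auto
    also have "\<dots> = C * (u powr (-p) * (1-u) powr (-p))"
    proof -
      have e1: "\<bar>t*u\<bar> powr (-p) = \<bar>t\<bar> powr (-p) * u powr (-p)"
        using u by (simp add: abs_mult powr_mult)
      have e2: "\<bar>t*(1-u)\<bar> powr (-p) = \<bar>t\<bar> powr (-p) * (1-u) powr (-p)"
        using u by (simp add: abs_mult powr_mult del: right_diff_distrib right_diff_distrib')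
      have e3: "\<bar>t\<bar> powr (-2*p) = \<bar>t\<bar> powr (-p) * \<bar>t\<bar> powr (-p)"
        by (simp add: powr_add[symmetric])
      show ?thesis unfolding C_def e1 e2 e3 by (simp add: power2_eq_square algebra_simps)
    qed
    finally show ?thesis .
  qed
  have "ennreal (norm (char M t)) \<le> (\<integral>\<^sup>+u. ennreal (norm (char M (t*u)) * norm (char M (t*(1-u)))) \<partial>unif01)"
    by (rule char_bound[OF M D])
  also have "\<dots> \<le> (\<integral>\<^sup>+u. ennreal C * ennreal (u powr (-p) * (1-u) powr (-p)) \<partial>unif01)"
  proof (rule nn_integral_mono_AE)
    show "AE u in unif01. ennreal (norm (char M (t*u)) * norm (char M (t*(1-u)))) \<le> ennreal C * ennreal (u powr (-p) * (1-u) powr (-p))"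
      unfolding unif01_def
      by (rule AE_uniform_measureI) (auto intro!: AE_I2 simp: ennreal_mult'[symmetric] C0 intro!: ennreal_leI pw)
  qed
  also have "\<dots> = ennreal C * ennreal (Beta (1-p) (1-p))"
    by (subst nn_integral_cmult) (auto simp: beta_nn[OF p])
  also have "\<dots> = ennreal (C * Beta (1-p) (1-p))" by (simp add: ennreal_mult' C0)
  finally have "norm (char M t) \<le> C * Beta (1-p) (1-p)"
    using C0 Beta_pos[of "1-p"] p by (subst (asm) ennreal_le_iff) auto
  hence "\<bar>t\<bar> powr (2*p) * norm (char M t) \<le> \<bar>t\<bar> powr (2*p) * (C * Beta (1-p) (1-p))"
    by (intro mult_left_mono) auto
  also have "\<dots> = c0\<^sup>2 * Beta (1-p) (1-p)"
    unfolding C_def using t by (simp add: powr_add[symmetric] algebra_simps)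
  finally show ?thesis .
qed

theorem lemma2p5:
  fixes M :: "real measure" and p :: real
  assumes "quicksort_limit_law M"
    and "0 < p" and "p < 1"
  shows "qs_c M (2 * p) \<le> ennreal ((Gamma (1 - p))\<^sup>2 / Gamma (2 - 2 * p)) * (qs_c M p)\<^sup>2"
proof -
  have M: "real_distribution M" and D: "distr (unif01 \<Otimes>\<^sub>M (M \<Otimes>\<^sub>M M)) borel
        (\<lambda>(u, y, z). u * y + (1 - u) * z + qs_g u) = M"
    using assms(1) unfolding quicksort_limit_law_def by auto
  have KB: "(Gamma (1 - p))\<^sup>2 / Gamma (2 - 2 * p) = Beta (1-p) (1-p)"
    unfolding Beta_def by (simp add: power2_eq_square)
  have Kpos: "Beta (1-p) (1-p) > 0" using assms by (intro Beta_pos) auto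
  show ?thesis
  proof (cases "qs_c M p" rule: ennreal_cases)
    case (real c0)
    have "qs_c M (2 * p) \<le> ennreal (c0\<^sup>2 * Beta (1-p) (1-p))"
      unfolding qs_c_def
    proof (rule SUP_least)
      fix t :: real
      show "ennreal (\<bar>t\<bar> powr (2 * p) * cmod (char M t)) \<le> ennreal (c0\<^sup>2 * Beta (1 - p) (1 - p))"
      proof (cases "t = 0")
        case True then show ?thesis by simp
      next
        case False
        show ?thesis by (rule ennreal_leI, rule pointwise[OF M D assms(2,3) real(2,1) False])
      qed
    qed
    also have "\<dots> = ennreal ((Gamma (1 - p))\<^sup>2 / Gamma (2 - 2 * p)) * (qs_c M p)\<^sup>2"
      unfolding KB real(2) using real(1) Kpos by (simp add: ennreal_mult' ennreal_power mult.commute)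
    finally show ?thesis .
  next
    case top
    then show ?thesis unfolding KB using Kpos by (simp add: power2_eq_square ennreal_mult_top)
  qed
qed

end
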